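(* Every proof in $\mathsf{PA}^\exists$ of a $\Sigma^0_1$ statement $\exists\alpha\mathsf{P}$ (with $\mathsf{P}$ atomic) can be transformed into a proof of $\exists\alpha\mathsf{P}$ in $\mathsf{HA}^\exists+\mathsf{EM}_1^-$.
   Context: The $\exists$-translation $F\mapsto F^\exists$ is: $F^\exists=F$ for atomic $F$; commuting with $\wedge,\vee,\to,\exists$; $(\forall xF)^\exists=\neg\exists x\neg F^\exists$. $\mathsf{PA}^\exists$ is the natural deduction system for arithmetic (over $0,\mathsf{S},+,\cdot,=$) with the intuitionistic rules for $\wedge,\vee,\to,\exists,\bot$, the $\exists$-translated arithmetical axioms, the translated induction rule (from $\Gamma\vdash A(0)$ and $\Gamma\vdash\neg\exists\alpha\neg(A(\alpha)\to A(\mathsf{S}\alpha))$ infer $\Gamma\vdash\neg\exists\alpha\neg A(\alpha)$), and the full excluded middle rule $\mathsf{EM}$ (from $\Gamma,A\vdash C$ and $\Gamma,\neg A\vdash C$ infer $\Gamma\vdash C$, $A,C$ arbitrary). $\mathsf{HA}^\exists$ is intuitionistic arithmetic with the $\exists$-translations of the Heyting arithmetic axioms. $\mathsf{EM}_1^-$ is the rule: for atomic $\mathsf{P}$ and $C$ (with $\mathsf{P}^\bot$ the complementary atomic predicate of $\mathsf{P}$), from $\Gamma,\forall\alpha\mathsf{P}\vdash\exists\beta C$ and $\Gamma,\exists\alpha\mathsf{P}^\bot\vdash\exists\beta C$ infer $\Gamma\vdash\exists\beta C$. *)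

theory Defs
  imports Main
begin

datatype tm = Var nat | Zero | Sc tm | Pl tm tm | Tms tm tm

text \<open>Atomic formulas: equations and their complements (disequations),
  so that every atomic predicate P has an atomic complement P-bot.
  Ex and All bind de Bruijn index 0.\<close>
datatype form =
    Eq tm tm | Neq tm tm | Bot
  | Conj form form | Disj form form | Imp form form
  | Ex form | All form

definition Neg :: "form \<Rightarrow> form" where "Neg A = Imp A Bot"

fun atomic :: "form \<Rightarrow> bool" where
  "atomic (Eq t u) = True"
| "atomic (Neq t u) = True"
| "atomic _ = False"

fun comp :: "form \<Rightarrow> form" where
  "comp (Eq t u) = Neq t u"
| "comp (Neq t u) = Eq t u"
| "comp A = A"

fun tsubst :: "(nat \<Rightarrow> tm) \<Rightarrow> tm \<Rightarrow> tm" where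
  "tsubst \<sigma> (Var n) = \<sigma> n"
| "tsubst \<sigma> Zero = Zero"
| "tsubst \<sigma> (Sc t) = Sc (tsubst \<sigma> t)"
| "tsubst \<sigma> (Pl t u) = Pl (tsubst \<sigma> t) (tsubst \<sigma> u)"
| "tsubst \<sigma> (Tms t u) = Tms (tsubst \<sigma> t) (tsubst \<sigma> u)"

definition up :: "(nat \<Rightarrow> tm) \<Rightarrow> nat \<Rightarrow> tm" where
  "up \<sigma> n = (case n of 0 \<Rightarrow> Var 0 | Suc m \<Rightarrow> tsubst (\<lambda>k. Var (Suc k)) (\<sigma> m))"

fun fsubst :: "(nat \<Rightarrow> tm) \<Rightarrow> form \<Rightarrow> form" where
  "fsubst \<sigma> (Eq t u) = Eq (tsubst \<sigma> t) (tsubst \<sigma> u)"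
| "fsubst \<sigma> (Neq t u) = Neq (tsubst \<sigma> t) (tsubst \<sigma> u)"
| "fsubst \<sigma> Bot = Bot"
| "fsubst \<sigma> (Conj A B) = Conj (fsubst \<sigma> A) (fsubst \<sigma> B)"
| "fsubst \<sigma> (Disj A B) = Disj (fsubst \<sigma> A) (fsubst \<sigma> B)"
| "fsubst \<sigma> (Imp A B) = Imp (fsubst \<sigma> A) (fsubst \<sigma> B)"
| "fsubst \<sigma> (Ex A) = Ex (fsubst (up \<sigma>) A)"
| "fsubst \<sigma> (All A) = All (fsubst (up \<sigma>) A)"

definition inst :: "form \<Rightarrow> tm \<Rightarrow> form" where
  "inst A t = fsubst (\<lambda>n. case n of 0 \<Rightarrow> t | Suc m \<Rightarrow> Var m) A"

definition lift :: "form \<Rightarrow> form" where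
  "lift A = fsubst (\<lambda>n. Var (Suc n)) A"

definition succ_body :: "form \<Rightarrow> form" where
  "succ_body A = fsubst (\<lambda>n. case n of 0 \<Rightarrow> Sc (Var 0) | Suc m \<Rightarrow> Var (Suc m)) A"

fun extr :: "form \<Rightarrow> form" where
  "extr (Eq t u) = Eq t u"
| "extr (Neq t u) = Neq t u"
| "extr Bot = Bot"
| "extr (Conj A B) = Conj (extr A) (extr B)"
| "extr (Disj A B) = Disj (extr A) (extr B)"
| "extr (Imp A B) = Imp (extr A) (extr B)"
| "extr (Ex A) = Ex (extr A)"
| "extr (All A) = Neg (Ex (Neg (extr A)))"

definition ha_axioms :: "form set" where
  "ha_axioms = {
     All (Eq (Var 0) (Var 0)),
     All (All (Imp (Eq (Var 1) (Var 0)) (Eq (Var 0) (Var 1)))),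
     All (All (All (Imp (Eq (Var 2) (Var 1)) (Imp (Eq (Var 1) (Var 0)) (Eq (Var 2) (Var 0)))))),
     All (All (Imp (Eq (Var 1) (Var 0)) (Eq (Sc (Var 1)) (Sc (Var 0))))),
     All (All (All (All (Imp (Eq (Var 3) (Var 2)) (Imp (Eq (Var 1) (Var 0))
        (Eq (Pl (Var 3) (Var 1)) (Pl (Var 2) (Var 0)))))))),
     All (All (All (All (Imp (Eq (Var 3) (Var 2)) (Imp (Eq (Var 1) (Var 0))
        (Eq (Tms (Var 3) (Var 1)) (Tms (Var 2) (Var 0)))))))),
     All (Neg (Eq (Sc (Var 0)) Zero)),
     All (All (Imp (Eq (Sc (Var 1)) (Sc (Var 0))) (Eq (Var 1) (Var 0)))),
     All (Eq (Pl (Var 0) Zero) (Var 0)),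
     All (All (Eq (Pl (Var 1) (Sc (Var 0))) (Sc (Pl (Var 1) (Var 0))))),
     All (Eq (Tms (Var 0) Zero) Zero),
     All (All (Eq (Tms (Var 1) (Sc (Var 0))) (Pl (Tms (Var 1) (Var 0)) (Var 1)))),
     All (All (Imp (Neq (Var 1) (Var 0)) (Neg (Eq (Var 1) (Var 0))))),
     All (All (Imp (Neg (Eq (Var 1) (Var 0))) (Neq (Var 1) (Var 0))))
   }"

datatype sys = PAex | HAexEM1

inductive deriv :: "sys \<Rightarrow> form set \<Rightarrow> form \<Rightarrow> bool" where
  hyp:   "A \<in> \<Gamma> \<Longrightarrow> deriv s \<Gamma> A"
| ax:    "B \<in> ha_axioms \<Longrightarrow> deriv s \<Gamma> (extr B)"
| conjI: "deriv s \<Gamma> A \<Longrightarrow> deriv s \<Gamma> B \<Longrightarrow> deriv s \<Gamma> (Conj A B)"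
| conjE1: "deriv s \<Gamma> (Conj A B) \<Longrightarrow> deriv s \<Gamma> A"
| conjE2: "deriv s \<Gamma> (Conj A B) \<Longrightarrow> deriv s \<Gamma> B"
| disjI1: "deriv s \<Gamma> A \<Longrightarrow> deriv s \<Gamma> (Disj A B)"
| disjI2: "deriv s \<Gamma> B \<Longrightarrow> deriv s \<Gamma> (Disj A B)"
| disjE: "deriv s \<Gamma> (Disj A B) \<Longrightarrow> deriv s (insert A \<Gamma>) C \<Longrightarrow>
          deriv s (insert B \<Gamma>) C \<Longrightarrow> deriv s \<Gamma> C"
| impI:  "deriv s (insert A \<Gamma>) B \<Longrightarrow> deriv s \<Gamma> (Imp A B)"
| impE:  "deriv s \<Gamma> (Imp A B) \<Longrightarrow> deriv s \<Gamma> A \<Longrightarrow> deriv s \<Gamma> B"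
| botE:  "deriv s \<Gamma> Bot \<Longrightarrow> deriv s \<Gamma> A"
| exI:   "deriv s \<Gamma> (inst A t) \<Longrightarrow> deriv s \<Gamma> (Ex A)"
| exE:   "deriv s \<Gamma> (Ex A) \<Longrightarrow> deriv s (insert A (lift ` \<Gamma>)) (lift C) \<Longrightarrow> deriv s \<Gamma> C"
| ind:   "deriv s \<Gamma> (inst A Zero) \<Longrightarrow>
          deriv s \<Gamma> (Neg (Ex (Neg (Imp A (succ_body A))))) \<Longrightarrow>
          deriv s \<Gamma> (Neg (Ex (Neg A)))"
| em:    "deriv PAex (insert A \<Gamma>) C \<Longrightarrow> deriv PAex (insert (Neg A) \<Gamma>) C \<Longrightarrow>
          deriv PAex \<Gamma> C"
| em1:   "atomic P \<Longrightarrow> atomic C \<Longrightarrow>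
          deriv HAexEM1 (insert (Neg (Ex (Neg P))) \<Gamma>) (Ex C) \<Longrightarrow>
          deriv HAexEM1 (insert (Ex (comp P)) \<Gamma>) (Ex C) \<Longrightarrow>
          deriv HAexEM1 \<Gamma> (Ex C)"

end

theory Submission
  imports Defs
begin

abbreviation NN :: "form \<Rightarrow> form" where "NN A \<equiv> Neg (Neg A)"

lemma tsubst_comp: "tsubst \<sigma> (tsubst \<tau> t) = tsubst (\<lambda>n. tsubst \<sigma> (\<tau> n)) t"
  by (induction t) auto

lemma up_comp: "up (\<lambda>n. tsubst \<sigma> (\<tau> n)) = (\<lambda>n. tsubst (up \<sigma>) (up \<tau> n))"
  by (auto simp: up_def tsubst_comp fun_eq_iff split: nat.split)

lemma fsubst_comp: "fsubst \<sigma> (fsubst \<tau> A) = fsubst (\<lambda>n. tsubst \<sigma> (\<tau> n)) A"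
  by (induction A arbitrary: \<sigma> \<tau>) (auto simp: tsubst_comp up_comp)

lemma tsubst_Var[simp]: "tsubst Var t = t" by (induction t) auto
lemma up_Var[simp]: "up Var = Var" by (auto simp: up_def fun_eq_iff split: nat.split)
lemma fsubst_Var[simp]: "fsubst Var A = A" by (induction A) auto

lemma fsubst_Neg[simp]: "fsubst \<sigma> (Neg A) = Neg (fsubst \<sigma> A)" by (simp add: Neg_def)
lemma inst_Neg[simp]: "inst (Neg A) t = Neg (inst A t)" by (simp add: inst_def)
lemma lift_Neg[simp]: "lift (Neg A) = Neg (lift A)" by (simp add: lift_def)
lemma extr_Neg[simp]: "extr (Neg A) = Neg (extr A)" by (simp add: Neg_def)

lemma inst_shift: "inst (fsubst (up (\<lambda>n. Var (Suc n))) Y) (Var 0) = Y"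
proof -
  have "(\<lambda>n. tsubst (\<lambda>n. case n of 0 \<Rightarrow> Var 0 | Suc m \<Rightarrow> Var m) (up (\<lambda>n. Var (Suc n)) n)) = Var"
    by (auto simp: up_def fun_eq_iff split: nat.split)
  then show ?thesis by (simp add: inst_def fsubst_comp)
qed

fun kt :: "form \<Rightarrow> form" where
  "kt (Eq t u) = NN (Eq t u)"
| "kt (Neq t u) = NN (Neq t u)"
| "kt Bot = Bot"
| "kt (Conj A B) = NN (Conj (kt A) (kt B))"
| "kt (Disj A B) = NN (Disj (kt A) (kt B))"
| "kt (Imp A B) = NN (Imp (kt A) (kt B))"
| "kt (Ex A) = NN (Ex (kt A))"
| "kt (All A) = NN (All (kt A))"

lemma kt_fsubst: "fsubst \<sigma> (kt A) = kt (fsubst \<sigma> A)"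
  by (induction A arbitrary: \<sigma>) auto

lemma kt_inst: "kt (inst A t) = inst (kt A) t" by (simp add: inst_def kt_fsubst)
lemma kt_lift: "kt (lift A) = lift (kt A)" by (simp add: lift_def kt_fsubst)
lemma kt_succ: "kt (succ_body A) = succ_body (kt A)" by (simp add: succ_body_def kt_fsubst)
lemma kt_Neg: "kt (Neg A) = NN (Neg (kt A))" by (simp add: Neg_def)

fun allfree :: "form \<Rightarrow> bool" where
  "allfree (Conj A B) = (allfree A \<and> allfree B)"
| "allfree (Disj A B) = (allfree A \<and> allfree B)"
| "allfree (Imp A B) = (allfree A \<and> allfree B)"
| "allfree (Ex A) = allfree A"
| "allfree (All A) = False"
| "allfree _ = True"

lemma allfree_extr: "allfree (extr B)"
  by (induction B) (auto simp: Neg_def)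

lemma weaken: "deriv s \<Gamma> A \<Longrightarrow> \<Gamma> \<subseteq> \<Delta> \<Longrightarrow> deriv s \<Delta> A"
proof (induction arbitrary: \<Delta> rule: deriv.induct)
  case (exE s \<Gamma> A C)
  then show ?case by (meson deriv.exE image_mono insert_mono)
next
  case (disjE s \<Gamma> A B C)
  then show ?case by (meson deriv.disjE insert_mono)
next
  case (em A \<Gamma> C)
  then show ?case by (meson deriv.em insert_mono)
next
  case (em1 P C \<Gamma>)
  then show ?case by (meson deriv.em1 insert_mono)
next
  case (impI s A \<Gamma> B)
  then show ?case by (meson deriv.impI insert_mono)
qed (auto intro: deriv.intros)

lemma wk: "deriv s \<Gamma> A \<Longrightarrow> deriv s (insert B \<Gamma>) A"
  using weaken by blast

lemma hypI: "deriv s (insert A \<Gamma>) A" by (rule deriv.hyp) simp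
lemma hyp2: "deriv s (insert B (insert A \<Gamma>)) A" by (rule deriv.hyp) simp
lemma hyp3: "deriv s (insert C (insert B (insert A \<Gamma>))) A" by (rule deriv.hyp) simp

lemma negI: "deriv s (insert A \<Gamma>) Bot \<Longrightarrow> deriv s \<Gamma> (Neg A)"
  unfolding Neg_def by (rule deriv.impI)
lemma negE: "deriv s \<Gamma> (Neg A) \<Longrightarrow> deriv s \<Gamma> A \<Longrightarrow> deriv s \<Gamma> Bot"
  unfolding Neg_def by (rule deriv.impE)

lemma nnI: "deriv s \<Gamma> A \<Longrightarrow> deriv s \<Gamma> (NN A)"
  by (rule negI, rule negE[OF hypI], erule wk)

lemma bindbot: "deriv s \<Gamma> (NN X) \<Longrightarrow> deriv s (insert X \<Gamma>) Bot \<Longrightarrow> deriv s \<Gamma> Bot"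
  by (erule negE, rule negI)

lemma nnmap: assumes a: "deriv s \<Gamma> (NN X)" and b: "deriv s (insert X \<Gamma>) Y"
  shows "deriv s \<Gamma> (NN Y)"
proof (rule negI, rule bindbot[OF wk[OF a]])
  show "deriv s (insert X (insert (Neg Y) \<Gamma>)) Bot"
    by (rule negE[OF hyp2], rule weaken[OF b]) blast
qed

lemma tnn: "deriv s \<Gamma> (Neg (NN X)) \<Longrightarrow> deriv s \<Gamma> (Neg X)"
  by (rule negI, rule negE, erule wk, rule nnI, rule hypI)

lemma bindneg: assumes a: "deriv s \<Gamma> (NN X)" and b: "deriv s (insert X \<Gamma>) (Neg Y)"
  shows "deriv s \<Gamma> (Neg Y)"
proof (rule negI, rule bindbot[OF wk[OF a]])
  show "deriv s (insert X (insert Y \<Gamma>)) Bot"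
    by (rule negE, rule weaken[OF b], blast, rule hyp2)
qed

lemma cut: "deriv s \<Gamma> X \<Longrightarrow> deriv s (insert X \<Gamma>) Y \<Longrightarrow> deriv s \<Gamma> Y"
  by (rule deriv.impE[OF deriv.impI])

lemma exmap: assumes a: "deriv s \<Gamma> (Ex X)" and b: "deriv s (insert X (lift ` \<Gamma>)) Y"
  shows "deriv s \<Gamma> (Ex Y)"
proof (rule deriv.exE[OF a])
  have "deriv s (insert X (lift ` \<Gamma>)) (Ex (fsubst (up (\<lambda>n. Var (Suc n))) Y))"
    by (rule deriv.exI[where t="Var 0"]) (simp add: inst_shift b)
  then show "deriv s (insert X (lift ` \<Gamma>)) (lift (Ex Y))" by (simp add: lift_def)
qed

lemma exnn: assumes a: "deriv s \<Gamma> (Ex (NN X))" shows "deriv s \<Gamma> (NN (Ex X))"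
proof (rule deriv.exE[OF a])
  have "deriv s (insert (NN X) (lift ` \<Gamma>)) (NN (Ex (fsubst (up (\<lambda>n. Var (Suc n))) X)))"
    by (rule nnmap[OF hypI], rule deriv.exI[where t="Var 0"]) (simp add: inst_shift hypI)
  then show "deriv s (insert (NN X) (lift ` \<Gamma>)) (lift (NN (Ex X)))" by (simp add: lift_def)
qed

lemma allE: "deriv s \<Gamma> (Neg (Ex (Neg Y))) \<Longrightarrow> deriv s \<Gamma> (NN (inst Y t))"
  apply (rule negI, rule negE, erule wk)
  apply (rule deriv.exI[where t=t])
  apply (simp add: hypI)
  done

lemma kt_cases: "kt C = Bot \<or> (\<exists>Y. kt C = Neg Y)" by (cases C) auto

lemma ktstab: "deriv s \<Gamma> (NN (kt C)) \<Longrightarrow> deriv s \<Gamma> (kt C)"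
  using kt_cases[of C]
  by (metis bindbot hypI tnn)

lemma bindkt: "deriv s \<Gamma> (NN X) \<Longrightarrow> deriv s (insert X \<Gamma>) (kt C) \<Longrightarrow> deriv s \<Gamma> (kt C)"
  using kt_cases[of C] by (auto intro: bindbot bindneg)

lemma nnconj: assumes a: "deriv s \<Gamma> (NN A)" and b: "deriv s \<Gamma> (NN B)"
  shows "deriv s \<Gamma> (NN (Conj A B))"
  apply (rule bindneg[OF a])
  apply (rule bindneg[OF wk[OF b]])
  apply (rule nnI, rule deriv.conjI, rule hyp2, rule hypI)
  done


lemma kt_equiv: "allfree A \<Longrightarrow> (\<forall>\<Gamma>. deriv s \<Gamma> (NN A) \<longrightarrow> deriv s \<Gamma> (kt A)) \<and>
   (\<forall>\<Gamma>. deriv s \<Gamma> (kt A) \<longrightarrow> deriv s \<Gamma> (NN A))"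
proof (induction A)
  case Bot
  then show ?case by (auto intro: bindbot hypI nnI)
next
  case (Conj A B)
  then have IA: "\<And>\<Gamma>. deriv s \<Gamma> (NN A) \<Longrightarrow> deriv s \<Gamma> (kt A)" "\<And>\<Gamma>. deriv s \<Gamma> (kt A) \<Longrightarrow> deriv s \<Gamma> (NN A)"
    and IB: "\<And>\<Gamma>. deriv s \<Gamma> (NN B) \<Longrightarrow> deriv s \<Gamma> (kt B)" "\<And>\<Gamma>. deriv s \<Gamma> (kt B) \<Longrightarrow> deriv s \<Gamma> (NN B)"
    by auto
  show ?case
  proof (intro HOL.conjI allI HOL.impI)
    fix \<Gamma> assume a: "deriv s \<Gamma> (NN (Conj A B))"
    show "deriv s \<Gamma> (kt (Conj A B))"
      unfolding kt.simps
      by (rule nnmap[OF a], rule deriv.conjI, rule IA(1), rule nnI, rule deriv.conjE1, rule hypI,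
          rule IB(1), rule nnI, rule deriv.conjE2, rule hypI)
  next
    fix \<Gamma> assume a: "deriv s \<Gamma> (kt (Conj A B))"
    show "deriv s \<Gamma> (NN (Conj A B))"
      by (rule bindneg[OF a[unfolded kt.simps]], rule nnconj, rule IA(2), rule deriv.conjE1, rule hypI,
          rule IB(2), rule deriv.conjE2, rule hypI)
  qed
next
  case (Disj A B)
  then have IA: "\<And>\<Gamma>. deriv s \<Gamma> (NN A) \<Longrightarrow> deriv s \<Gamma> (kt A)" "\<And>\<Gamma>. deriv s \<Gamma> (kt A) \<Longrightarrow> deriv s \<Gamma> (NN A)"
    and IB: "\<And>\<Gamma>. deriv s \<Gamma> (NN B) \<Longrightarrow> deriv s \<Gamma> (kt B)" "\<And>\<Gamma>. deriv s \<Gamma> (kt B) \<Longrightarrow> deriv s \<Gamma> (NN B)"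
    by auto
  show ?case
  proof (intro HOL.conjI allI HOL.impI)
    fix \<Gamma> assume a: "deriv s \<Gamma> (NN (Disj A B))"
    show "deriv s \<Gamma> (kt (Disj A B))"
      unfolding kt.simps
      by (rule nnmap[OF a], rule deriv.disjE[OF hypI], rule deriv.disjI1, rule IA(1), rule nnI, rule hypI,
          rule deriv.disjI2, rule IB(1), rule nnI, rule hypI)
  next
    fix \<Gamma> assume a: "deriv s \<Gamma> (kt (Disj A B))"
    show "deriv s \<Gamma> (NN (Disj A B))"
      by (rule bindneg[OF a[unfolded kt.simps]], rule deriv.disjE[OF hypI],
          rule nnmap, rule IA(2), rule hypI, rule deriv.disjI1, rule hypI,
          rule nnmap, rule IB(2), rule hypI, rule deriv.disjI2, rule hypI)
  qed
next
  case (Imp A B)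
  then have IA: "\<And>\<Gamma>. deriv s \<Gamma> (NN A) \<Longrightarrow> deriv s \<Gamma> (kt A)" "\<And>\<Gamma>. deriv s \<Gamma> (kt A) \<Longrightarrow> deriv s \<Gamma> (NN A)"
    and IB: "\<And>\<Gamma>. deriv s \<Gamma> (NN B) \<Longrightarrow> deriv s \<Gamma> (kt B)" "\<And>\<Gamma>. deriv s \<Gamma> (kt B) \<Longrightarrow> deriv s \<Gamma> (NN B)"
    by auto
  show ?case
  proof (intro HOL.conjI allI HOL.impI)
    fix \<Gamma> assume a: "deriv s \<Gamma> (NN (Imp A B))"
    show "deriv s \<Gamma> (kt (Imp A B))"
      unfolding kt.simps
      by (rule nnmap[OF a], rule deriv.impI, rule IB(1), rule nnmap, rule IA(2), rule hypI,
          rule deriv.impE, rule hyp3, rule hypI)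
  next
    fix \<Gamma> assume a: "deriv s \<Gamma> (kt (Imp A B))"
    show "deriv s \<Gamma> (NN (Imp A B))"
    proof (rule bindneg[OF a[unfolded kt.simps]], rule negI)
      let ?T = "insert (Neg (Imp A B)) (insert (Imp (kt A) (kt B)) \<Gamma>)"
      have nA: "deriv s ?T (NN A)"
        by (rule negI, rule negE, rule hyp2, rule deriv.impI, rule deriv.botE,
            rule negE, rule hyp2, rule hypI)
      have kB: "deriv s ?T (kt B)"
        by (rule deriv.impE[OF hyp2 IA(1)[OF nA]])
      have nB: "deriv s ?T (Neg B)"
        by (rule negI, rule negE, rule hyp2, rule deriv.impI, rule hyp2)
      show "deriv s ?T Bot" by (rule negE[OF IB(2)[OF kB] nB])
    qed
  qed
next
  case (Ex A)
  then have IA: "\<And>\<Gamma>. deriv s \<Gamma> (NN A) \<Longrightarrow> deriv s \<Gamma> (kt A)" "\<And>\<Gamma>. deriv s \<Gamma> (kt A) \<Longrightarrow> deriv s \<Gamma> (NN A)"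
    by auto
  show ?case
  proof (intro HOL.conjI allI HOL.impI)
    fix \<Gamma> assume a: "deriv s \<Gamma> (NN (Ex A))"
    show "deriv s \<Gamma> (kt (Ex A))"
      unfolding kt.simps
      by (rule nnmap[OF a], rule exmap[OF hypI], rule IA(1), rule nnI, rule hypI)
  next
    fix \<Gamma> assume a: "deriv s \<Gamma> (kt (Ex A))"
    show "deriv s \<Gamma> (NN (Ex A))"
      by (rule bindneg[OF a[unfolded kt.simps]], rule exnn, rule exmap[OF hypI], rule IA(2), rule hypI)
  qed
qed auto

lemma ax13: assumes n: "deriv s \<Gamma> (Neq a b)" and e: "deriv s \<Gamma> (Eq a b)"
  shows "deriv s \<Gamma> Bot"
proof -
  let ?Z = "Imp (Neq (Var 1) (Var 0)) (Neg (Eq (Var 1) (Var 0)))"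
  have ax: "deriv s \<Gamma> (extr (All (All ?Z)))"
    by (rule deriv.ax) (simp add: ha_axioms_def)
  then have "deriv s \<Gamma> (Neg (Ex (Neg (Neg (Ex (Neg ?Z))))))" by simp
  from allE[OF this, of a] have "deriv s \<Gamma> (Neg (NN (Ex (Neg (fsubst (up (\<lambda>n. case n of 0 \<Rightarrow> a | Suc m \<Rightarrow> Var m)) ?Z)))))"
    by (simp add: inst_def)
  from allE[OF tnn[OF this], of b] have h: "deriv s \<Gamma> (NN (Imp (Neq a b) (Neg (Eq a b))))"
    by (simp add: inst_def up_def tsubst_comp)
  show ?thesis
    by (rule bindbot[OF h], rule negE[of _ _ "Eq a b"], rule deriv.impE, rule hypI, rule wk[OF n], rule wk[OF e])
qed

lemma main_trans: "deriv s \<Gamma> A \<Longrightarrow> s = PAex \<Longrightarrow> deriv HAexEM1 (kt ` \<Gamma>) (kt A)"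
proof (induction rule: deriv.induct)
  case (hyp A \<Gamma> s)
  then show ?case by (auto intro: deriv.hyp)
next
  case (ax B s \<Gamma>)
  have "deriv HAexEM1 (kt ` \<Gamma>) (NN (extr B))"
    by (rule nnI, rule deriv.ax, rule ax.hyps)
  then show ?case using kt_equiv[OF allfree_extr[of B]] by blast
next
  case (conjI s \<Gamma> A B)
  then show ?case by (auto intro: nnI deriv.intros)
next
  case (conjE1 s \<Gamma> A B)
  then have h: "deriv HAexEM1 (kt ` \<Gamma>) (NN (Conj (kt A) (kt B)))" by simp
  show ?case by (rule bindkt[OF h], rule deriv.conjE1, rule hypI)
next
  case (conjE2 s \<Gamma> A B)
  then have h: "deriv HAexEM1 (kt ` \<Gamma>) (NN (Conj (kt A) (kt B)))" by simp
  show ?case by (rule bindkt[OF h], rule deriv.conjE2, rule hypI)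
next
  case (disjI1 s \<Gamma> A B)
  then show ?case by (auto intro: nnI deriv.intros)
next
  case (disjI2 s \<Gamma> B A)
  then show ?case by (auto intro: nnI deriv.intros)
next
  case (disjE s \<Gamma> A B C)
  then have h1: "deriv HAexEM1 (kt ` \<Gamma>) (NN (Disj (kt A) (kt B)))"
    and h2: "deriv HAexEM1 (insert (kt A) (kt ` \<Gamma>)) (kt C)"
    and h3: "deriv HAexEM1 (insert (kt B) (kt ` \<Gamma>)) (kt C)" by auto
  show ?case
    by (rule bindkt[OF h1], rule deriv.disjE[OF hypI], (rule weaken[OF h2], blast),
        rule weaken[OF h3], blast)
next
  case (impI s A \<Gamma> B)
  then show ?case by (auto intro: nnI deriv.intros)
next
  case (impE s \<Gamma> A B)
  then have h1: "deriv HAexEM1 (kt ` \<Gamma>) (NN (Imp (kt A) (kt B)))"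
    and h2: "deriv HAexEM1 (kt ` \<Gamma>) (kt A)" by auto
  show ?case by (rule bindkt[OF h1], rule deriv.impE[OF hypI wk[OF h2]])
next
  case (botE s \<Gamma> A)
  then show ?case using kt_cases[of A] by (auto intro: deriv.botE)
next
  case (exI s \<Gamma> A t)
  then show ?case by (auto intro!: nnI deriv.exI[where t=t] simp: kt_inst)
next
  case (exE s \<Gamma> A C)
  then have h1: "deriv HAexEM1 (kt ` \<Gamma>) (NN (Ex (kt A)))"
    and h2: "deriv HAexEM1 (insert (kt A) (lift ` kt ` \<Gamma>)) (lift (kt C))"
    by (auto simp: image_image kt_lift)
  show ?case
    by (rule bindkt[OF h1], rule deriv.exE[OF hypI], rule weaken[OF h2], blast)
next
  case (ind s \<Gamma> A)
  let ?G = "kt ` \<Gamma>"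
  from ind have h1: "deriv HAexEM1 ?G (inst (kt A) Zero)" by (simp add: kt_inst)
  from ind have h2: "deriv HAexEM1 ?G (NN (Neg (NN (Ex (NN (Neg (NN (Imp (kt A) (succ_body (kt A))))))))))"
    by (simp add: kt_Neg kt_succ)
  have h3: "deriv HAexEM1 ?G (Neg (Ex (NN (Neg (NN (Imp (kt A) (succ_body (kt A))))))))"
    by (rule tnn, rule tnn, rule h2)
  have h4: "deriv HAexEM1 ?G (Neg (Ex (Neg (Imp (kt A) (succ_body (kt A))))))"
    by (rule negI, rule negE, rule wk[OF h3], rule exmap[OF hypI], rule nnI,
        rule negI, rule negE, rule hypI, rule hyp2)
  have h5: "deriv HAexEM1 ?G (Neg (Ex (Neg (kt A))))"
    by (rule deriv.ind[OF h1 h4])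
  have "deriv HAexEM1 ?G (NN (Neg (NN (Ex (NN (Neg (kt A)))))))"
    by (rule nnI, rule negI, rule bindbot[OF hypI], rule negE, rule wk, rule wk[OF h5],
        rule exmap[OF hypI], rule tnn, rule hypI)
  then show ?case by (simp add: kt_Neg)
next
  case (em A \<Gamma> C)
  let ?G = "kt ` \<Gamma>"
  from em have h1: "deriv HAexEM1 (insert (kt A) ?G) (kt C)"
    and h2: "deriv HAexEM1 (insert (NN (Neg (kt A))) ?G) (kt C)" by (auto simp: kt_Neg)
  have "deriv HAexEM1 ?G (NN (kt C))"
  proof (rule negI)
    let ?T = "insert (Neg (kt C)) ?G"
    have c: "deriv HAexEM1 ?T (NN (Neg (kt A)))"
      by (rule nnI, rule negI, rule negE, rule hyp2, rule weaken[OF h1], blast)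
    have "deriv HAexEM1 ?T (kt C)"
      by (rule cut[OF c], rule weaken[OF h2], blast)
    then show "deriv HAexEM1 ?T Bot" by (rule negE[OF hypI])
  qed
  then show ?case by (rule ktstab)
next
  case (em1 P C \<Gamma>)
  then show ?case by simp
qed

lemma markov_aux:
  assumes h: "deriv HAexEM1 \<Gamma> (NN (Ex Q))" and atQ: "atomic Q" and atP: "atomic P"
    and nq: "\<And>\<Delta>. deriv HAexEM1 (insert Q \<Delta>) (Neg P)"
    and cp: "comp P = Q"
  shows "deriv HAexEM1 \<Gamma> (Ex Q)"
proof (rule deriv.em1[OF atP atQ])
  show "deriv HAexEM1 (insert (Ex (comp P)) \<Gamma>) (Ex Q)" unfolding cp by (rule hypI)
  let ?T = "insert (Neg (Ex (Neg P))) \<Gamma>"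
  have "deriv HAexEM1 ?T Bot"
  proof (rule bindbot[OF wk[OF h]], rule deriv.exE[OF hypI])
    have "deriv HAexEM1 (insert Q (lift ` insert (Ex Q) ?T)) (Neg (Ex (Neg (fsubst (up (\<lambda>n. Var (Suc n))) P))))"
      by (rule deriv.hyp) (simp add: lift_def)
    moreover have "deriv HAexEM1 (insert Q (lift ` insert (Ex Q) ?T)) (Ex (Neg (fsubst (up (\<lambda>n. Var (Suc n))) P)))"
      by (rule deriv.exI[where t="Var 0"]) (simp add: inst_shift nq)
    ultimately show "deriv HAexEM1 (insert Q (lift ` insert (Ex Q) ?T)) (lift Bot)"
      by (simp add: lift_def negE)
  qed
  then show "deriv HAexEM1 ?T (Ex Q)" by (rule deriv.botE)
qed

lemma markov: "atomic P \<Longrightarrow> deriv HAexEM1 \<Gamma> (NN (Ex P)) \<Longrightarrow> deriv HAexEM1 \<Gamma> (Ex P)"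
proof (cases P)
  case (Eq t u)
  assume h: "deriv HAexEM1 \<Gamma> (NN (Ex P))"
  show ?thesis unfolding Eq
    by (rule markov_aux[OF h[unfolded Eq], where P="Neq t u"], simp, simp,
        rule negI, rule ax13, rule hypI, rule hyp2, simp)
next
  case (Neq t u)
  assume h: "deriv HAexEM1 \<Gamma> (NN (Ex P))"
  show ?thesis unfolding Neq
    by (rule markov_aux[OF h[unfolded Neq], where P="Eq t u"], simp, simp,
        rule negI, rule ax13, rule hyp2, rule hypI, simp)
qed auto

theorem mainTheorem11:
  assumes "atomic P"
      and "deriv PAex {} (Ex P)"
  shows "deriv HAexEM1 {} (Ex P)"
proof -
  have kP: "kt P = NN P" using assms(1) by (cases P) auto
  have "deriv HAexEM1 {} (kt (Ex P))" using main_trans[OF assms(2)] by simp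
  then have h: "deriv HAexEM1 {} (NN (Ex (NN P)))" by (simp add: kP)
  have "deriv HAexEM1 {} (NN (Ex P))"
    by (rule bindneg[OF h], rule exnn, rule hypI)
  then show ?thesis by (rule markov[OF assms(1)])
qed

end
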